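(* Let $r>0$ be a fixed integer. There exist a constant $c>0$ and infinitely many $n$ such that, for each such $n$, there is a hypergraph $H$ on $n$ vertices which is both $r$-cross-free and $r$-closed, and such that every sub-hypergraph $H'\subseteq H$ with $\mathrm{cl}_r(H')=H$ has at least $c\, n^r$ hyperedges (i.e. $\Omega(n^r)$ hyperedges).
   Context: Hypergraphs have vertex set $V=[n]$ and are identified with their sets of hyperedges; a sub-hypergraph is a subset of the hyperedge set; $\overline A = V\setminus A$. $\mathcal K_r(n)$ is the class of hypergraphs $\mathcal E$ on $V$ satisfying: (R0) every $X\subseteq V$ with $|X|\le r$ is in $\mathcal E$; (R1) $A\in\mathcal E\Rightarrow V\setminus A\in\mathcal E$; (R2) $A,B\in\mathcal E$ and $|A\cap B|\ge r\Rightarrow A\cup B\in\mathcal E$. $\mathcal K^0_r(n)$ is the class satisfying (R0) and (R1) only. $\mathrm{cl}_r(H)$ (resp. $\mathrm{cl}^0_r(H)$) is the intersection of all hypergraphs in $\mathcal K_r(n)$ (resp. $\mathcal K^0_r(n)$) containing $H$. $H$ is $r$-closed if $\mathrm{cl}_r(H)=H$. Sets $A,B\subseteq V$ are $r$-orthogonal if $\mathrm{cl}_r(\{A,B\})=\mathrm{cl}^0_r(\{A,B\})$. A hypergraph is $r$-cross-free if every pair of its hyperedges is $r$-orthogonal. *)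

theory Defs
  imports Complex_Main
begin

definition vset :: "nat \<Rightarrow> nat set" where
  "vset n = {1..n}"

definition K_class :: "nat \<Rightarrow> nat \<Rightarrow> nat set set set" where
  "K_class r n = {E. E \<subseteq> Pow (vset n)
     \<and> (\<forall>X. X \<subseteq> vset n \<and> card X \<le> r \<longrightarrow> X \<in> E)
     \<and> (\<forall>A\<in>E. vset n - A \<in> E)
     \<and> (\<forall>A\<in>E. \<forall>B\<in>E. card (A \<inter> B) \<ge> r \<longrightarrow> A \<union> B \<in> E)}"

definition K0_class :: "nat \<Rightarrow> nat \<Rightarrow> nat set set set" where
  "K0_class r n = {E. E \<subseteq> Pow (vset n)
     \<and> (\<forall>X. X \<subseteq> vset n \<and> card X \<le> r \<longrightarrow> X \<in> E)
     \<and> (\<forall>A\<in>E. vset n - A \<in> E)}"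

definition cl :: "nat \<Rightarrow> nat \<Rightarrow> nat set set \<Rightarrow> nat set set" where
  "cl r n H = \<Inter> {E \<in> K_class r n. H \<subseteq> E}"

definition cl0 :: "nat \<Rightarrow> nat \<Rightarrow> nat set set \<Rightarrow> nat set set" where
  "cl0 r n H = \<Inter> {E \<in> K0_class r n. H \<subseteq> E}"

definition r_closed :: "nat \<Rightarrow> nat \<Rightarrow> nat set set \<Rightarrow> bool" where
  "r_closed r n H \<longleftrightarrow> cl r n H = H"

definition r_orthogonal :: "nat \<Rightarrow> nat \<Rightarrow> nat set \<Rightarrow> nat set \<Rightarrow> bool" where
  "r_orthogonal r n A B \<longleftrightarrow> cl r n {A, B} = cl0 r n {A, B}"

definition r_cross_free :: "nat \<Rightarrow> nat \<Rightarrow> nat set set \<Rightarrow> bool" where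
  "r_cross_free r n H \<longleftrightarrow> (\<forall>A\<in>H. \<forall>B\<in>H. r_orthogonal r n A B)"

end

theory Submission
  imports Defs "HOL-Library.FuncSet"
begin


definition Ssm :: "nat \<Rightarrow> nat \<Rightarrow> nat set set" where
  "Ssm r n = {X. X \<subseteq> vset n \<and> (card X \<le> r \<or> card (vset n - X) \<le> r)}"

definition FF :: "nat \<Rightarrow> nat \<Rightarrow> nat set set \<Rightarrow> nat set set" where
  "FF r n Q = Ssm r n \<union> Q \<union> (\<lambda>A. vset n - A) ` Q"

definition goodP :: "nat \<Rightarrow> nat \<Rightarrow> nat set set \<Rightarrow> bool" where
  "goodP r n P \<longleftrightarrow> P \<subseteq> Pow (vset n) \<and> (\<forall>A\<in>P. card A = Suc r) \<and>
     (\<forall>A\<in>P. \<forall>B\<in>P. A \<noteq> B \<longrightarrow> card (A \<inter> B) < r)"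

lemma fin_v[simp]: "finite (vset n)" by (simp add: vset_def)

lemma card_comp: "A \<subseteq> vset n \<Longrightarrow> card (vset n - A) = n - card A"
  by (metis card_Diff_subset fin_v finite_subset card_atLeastAtMost diff_Suc_1 vset_def)

lemma small_sub:
  assumes "finite X" "card X \<le> r" "card (X \<inter> Y) \<ge> r"
  shows "X \<subseteq> Y"
proof -
  have "X \<inter> Y \<subseteq> X" by blast
  moreover have "card (X \<inter> Y) \<ge> card X" using assms by linarith
  ultimately have "X \<inter> Y = X" using assms(1) by (metis card_seteq)
  thus ?thesis by blast
qed

lemma cosmall_union:
  assumes "X \<in> Ssm r n" "card (vset n - X) \<le> r" "Y \<subseteq> vset n"
  shows "X \<union> Y \<in> Ssm r n"
proof -
  have "vset n - (X \<union> Y) \<subseteq> vset n - X" by blast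
  hence "card (vset n - (X \<union> Y)) \<le> card (vset n - X)" by (intro card_mono) auto
  thus ?thesis using assms unfolding Ssm_def by auto
qed

lemma FF_sub: "Q \<subseteq> Pow (vset n) \<Longrightarrow> FF r n Q \<subseteq> Pow (vset n)"
  unfolding FF_def Ssm_def by auto

lemma FF_K:
  assumes r: "r > 0" and g: "goodP r n Q"
  shows "FF r n Q \<in> K_class r n"
proof -
  let ?V = "vset n"
  have QP: "Q \<subseteq> Pow ?V" and cQ: "\<And>A. A \<in> Q \<Longrightarrow> card A = Suc r"
    and iQ: "\<And>A B. A \<in> Q \<Longrightarrow> B \<in> Q \<Longrightarrow> A \<noteq> B \<Longrightarrow> card (A \<inter> B) < r"
    using g unfolding goodP_def by auto
  have sub: "FF r n Q \<subseteq> Pow ?V" using FF_sub[OF QP] .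
  have R0: "\<forall>X. X \<subseteq> ?V \<and> card X \<le> r \<longrightarrow> X \<in> FF r n Q"
    unfolding FF_def Ssm_def by auto
  have R1: "\<forall>A\<in>FF r n Q. ?V - A \<in> FF r n Q"
  proof
    fix A assume "A \<in> FF r n Q"
    then consider "A \<in> Ssm r n" | "A \<in> Q" | C where "C \<in> Q" "A = ?V - C"
      unfolding FF_def by auto
    then show "?V - A \<in> FF r n Q"
    proof cases
      case 1
      then have "A \<subseteq> ?V" unfolding Ssm_def by auto
      hence "?V - (?V - A) = A" by blast
      with 1 show ?thesis unfolding FF_def Ssm_def by auto
    next
      case 2 then show ?thesis unfolding FF_def by auto
    next
      case 3
      then have "?V - A = C" using QP by auto
      with 3 show ?thesis unfolding FF_def by auto
    qed
  qed
  have cs: "\<And>X Y. X \<in> Ssm r n \<Longrightarrow> card (?V - X) \<le> r \<Longrightarrow> Y \<in> FF r n Q \<Longrightarrow> X \<union> Y \<in> FF r n Q"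
    using cosmall_union sub unfolding FF_def by blast
  have R2: "\<And>X Y. X \<in> FF r n Q \<Longrightarrow> Y \<in> FF r n Q \<Longrightarrow> card (X \<inter> Y) \<ge> r \<Longrightarrow> X \<union> Y \<in> FF r n Q"
  proof -
    fix X Y assume X: "X \<in> FF r n Q" and Y: "Y \<in> FF r n Q" and c: "card (X \<inter> Y) \<ge> r"
    have XV: "X \<subseteq> ?V" "Y \<subseteq> ?V" using X Y sub by auto
    show "X \<union> Y \<in> FF r n Q"
    proof (cases "X \<in> Ssm r n")
      case True
      show ?thesis
      proof (cases "card (?V - X) \<le> r")
        case True thus ?thesis using cs \<open>X \<in> Ssm r n\<close> Y by blast
      next
        case False
        hence "card X \<le> r" using \<open>X \<in> Ssm r n\<close> unfolding Ssm_def by auto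
        moreover have "finite X" using XV(1) finite_subset fin_v by blast
        ultimately have "X \<subseteq> Y" using small_sub[of X r Y] c by auto
        hence "X \<union> Y = Y" by blast
        thus ?thesis using Y by simp
      qed
    next
      case XS: False
      show ?thesis
      proof (cases "Y \<in> Ssm r n")
        case True
        show ?thesis
        proof (cases "card (?V - Y) \<le> r")
          case True thus ?thesis using cs \<open>Y \<in> Ssm r n\<close> X by (metis sup_commute)
        next
          case False
          hence "card Y \<le> r" using \<open>Y \<in> Ssm r n\<close> unfolding Ssm_def by auto
          moreover have "finite Y" using XV(2) finite_subset fin_v by blast
          ultimately have "Y \<subseteq> X" using small_sub[of Y r X] c by (auto simp: Int_commute)
          hence "X \<union> Y = X" by blast
          thus ?thesis using X by simp
        qed
      next
        case YS: False
        from X XS consider "X \<in> Q" | A where "A \<in> Q" "X = ?V - A" unfolding FF_def by auto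
        note cX = this
        from Y YS consider "Y \<in> Q" | B where "B \<in> Q" "Y = ?V - B" unfolding FF_def by auto
        note cY = this
        have mixed: "A \<union> (?V - B) \<in> FF r n Q" if A: "A \<in> Q" and B: "B \<in> Q" for A B
        proof (cases "A \<inter> B = {}")
          case True
          hence "A \<union> (?V - B) = ?V - B" using A QP by auto
          thus ?thesis using B unfolding FF_def by auto
        next
          case False
          have fB: "finite B" using B QP finite_subset fin_v by blast
          have "B - A \<subset> B" using False by blast
          hence "card (B - A) < card B" using fB psubset_card_mono by blast
          hence "card (B - A) \<le> r" using cQ[OF B] by simp
          moreover have "?V - (A \<union> (?V - B)) = B - A" using B QP by auto
          moreover have "A \<union> (?V - B) \<subseteq> ?V" using A QP by auto
          ultimately show ?thesis unfolding FF_def Ssm_def by auto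
        qed
        show ?thesis
        proof (cases rule: cX)
          case 1
          show ?thesis
          proof (cases rule: cY)
            case 1
            have "X = Y"
            proof (rule ccontr)
              assume "X \<noteq> Y" thus False using iQ[OF \<open>X \<in> Q\<close> \<open>Y \<in> Q\<close>] c by simp
            qed
            thus ?thesis using X by simp
          next
            case (2 B) thus ?thesis using mixed \<open>X \<in> Q\<close> by simp
          qed
        next
          case (2 A)
          show ?thesis
          proof (cases rule: cY)
            case 1 thus ?thesis using mixed[of Y A] \<open>A \<in> Q\<close> \<open>X = ?V - A\<close> by (simp add: sup_commute)
          next
            case (2 B)
            show ?thesis
            proof (cases "A = B")
              case True thus ?thesis using X \<open>X = ?V - A\<close> \<open>Y = ?V - B\<close> by simp
            next
              case False
              have "card (A \<inter> B) \<le> r" using iQ[OF \<open>A \<in> Q\<close> \<open>B \<in> Q\<close> False] by simp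
              moreover have "?V - (X \<union> Y) = A \<inter> B" using \<open>X = ?V - A\<close> \<open>Y = ?V - B\<close> \<open>A \<in> Q\<close> QP by auto
              moreover have "X \<union> Y \<subseteq> ?V" using XV by auto
              ultimately show ?thesis unfolding FF_def Ssm_def by auto
            qed
          qed
        qed
      qed
    qed
  qed
  have R2': "\<forall>A\<in>FF r n Q. \<forall>B\<in>FF r n Q. card (A \<inter> B) \<ge> r \<longrightarrow> A \<union> B \<in> FF r n Q"
    using R2 by blast
  show ?thesis unfolding K_class_def by (rule CollectI, intro conjI, fact sub, fact R0, fact R1, fact R2')
qed


lemma FF_min:
  assumes E: "E \<in> K0_class r n" and QP: "Q \<subseteq> Pow (vset n)"
    and h: "\<forall>A\<in>Q. A \<in> E \<or> vset n - A \<in> E"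
  shows "FF r n Q \<subseteq> E"
proof
  let ?V = "vset n"
  have R0: "\<And>X. X \<subseteq> ?V \<Longrightarrow> card X \<le> r \<Longrightarrow> X \<in> E" and R1: "\<And>A. A \<in> E \<Longrightarrow> ?V - A \<in> E"
    using E unfolding K0_class_def by auto
  have both: "A \<in> E \<and> ?V - A \<in> E" if "A \<in> Q" for A
  proof -
    have "?V - (?V - A) = A" using that QP by auto
    thus ?thesis using h that R1 by metis
  qed
  fix X assume "X \<in> FF r n Q"
  then consider "X \<in> Ssm r n" | "X \<in> Q" | C where "C \<in> Q" "X = ?V - C"
    unfolding FF_def by auto
  then show "X \<in> E"
  proof cases
    case 1
    show ?thesis
    proof (cases "card X \<le> r")
      case True thus ?thesis using 1 R0 unfolding Ssm_def by auto
    next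
      case False
      hence "card (?V - X) \<le> r" "X \<subseteq> ?V" using 1 unfolding Ssm_def by auto
      hence "?V - X \<in> E" using R0 by auto
      moreover have "?V - (?V - X) = X" using \<open>X \<subseteq> ?V\<close> by auto
      ultimately show ?thesis using R1 by metis
    qed
  qed (use both in auto)
qed

lemma K_K0: "K_class r n \<subseteq> K0_class r n"
  unfolding K_class_def K0_class_def by auto

lemma cl_eq:
  assumes r: "r > 0" and g: "goodP r n Q" and G: "G \<subseteq> FF r n Q"
    and h: "\<forall>A\<in>Q. A \<in> G \<or> vset n - A \<in> G"
  shows "cl r n G = FF r n Q \<and> cl0 r n G = FF r n Q"
proof -
  have QP: "Q \<subseteq> Pow (vset n)" using g unfolding goodP_def by auto
  have K: "FF r n Q \<in> K_class r n" using FF_K[OF r g] .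
  have m: "FF r n Q \<subseteq> E" if "E \<in> K0_class r n" "G \<subseteq> E" for E
    using FF_min[OF that(1) QP] h that(2) by blast
  have "cl r n G = FF r n Q"
  proof
    show "cl r n G \<subseteq> FF r n Q" unfolding cl_def using K G by blast
    show "FF r n Q \<subseteq> cl r n G" unfolding cl_def using m K_K0 by blast
  qed
  moreover have "cl0 r n G = FF r n Q"
  proof
    show "cl0 r n G \<subseteq> FF r n Q" unfolding cl0_def using K K_K0 G by blast
    show "FF r n Q \<subseteq> cl0 r n G" unfolding cl0_def using m by blast
  qed
  ultimately show ?thesis by simp
qed

lemma goodP_sub: "goodP r n P \<Longrightarrow> Q \<subseteq> P \<Longrightarrow> goodP r n Q"
  unfolding goodP_def by blast

lemma main_props:
  assumes r: "r > 0" and g: "goodP r n P" and nbig: "n \<ge> 2 * r + 3"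
  shows "FF r n P \<subseteq> Pow (vset n) \<and> r_cross_free r n (FF r n P) \<and> r_closed r n (FF r n P) \<and>
     (\<forall>H'. H' \<subseteq> FF r n P \<and> cl r n H' = FF r n P \<longrightarrow> card P \<le> 2 * card H')"
proof -
  let ?V = "vset n"
  let ?H = "FF r n P"
  have QP: "P \<subseteq> Pow ?V" and cP: "\<And>A. A \<in> P \<Longrightarrow> card A = Suc r"
    using g unfolding goodP_def by auto
  have s1: "?H \<subseteq> Pow ?V" using FF_sub[OF QP] .
  have s2: "r_closed r n ?H" unfolding r_closed_def using cl_eq[OF r g, of ?H] unfolding FF_def by auto
  have s3: "r_cross_free r n ?H" unfolding r_cross_free_def r_orthogonal_def
  proof (intro ballI)
    fix A B assume A: "A \<in> ?H" and B: "B \<in> ?H"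
    define Q where "Q = {C \<in> P. C \<in> {A, B} \<or> ?V - C \<in> {A, B}}"
    have gQ: "goodP r n Q" using goodP_sub[OF g] Q_def by auto
    have "{A, B} \<subseteq> FF r n Q" using A B unfolding FF_def Q_def by auto
    moreover have "\<forall>C\<in>Q. C \<in> {A,B} \<or> ?V - C \<in> {A,B}" unfolding Q_def by auto
    ultimately show "cl r n {A, B} = cl0 r n {A, B}" using cl_eq[OF r gQ] by simp
  qed
  have s4: "card P \<le> 2 * card H'" if H': "H' \<subseteq> ?H" "cl r n H' = ?H" for H'
  proof -
    have fH': "finite H'" using H' s1 finite_subset by (meson finite_Pow_iff fin_v)
    have "P \<subseteq> H' \<union> (\<lambda>X. ?V - X) ` H'"
    proof
      fix A assume A: "A \<in> P"
      show "A \<in> H' \<union> (\<lambda>X. ?V - X) ` H'"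
      proof (rule ccontr)
        assume nA: "A \<notin> H' \<union> (\<lambda>X. ?V - X) ` H'"
        have AV: "A \<subseteq> ?V" using A QP by auto
        have nA2: "?V - A \<notin> H'"
        proof
          assume "?V - A \<in> H'"
          moreover have "?V - (?V - A) = A" using AV by auto
          ultimately show False using nA by (metis UnI2 image_eqI)
        qed
        define Q where "Q = P - {A}"
        have gQ: "goodP r n Q" using goodP_sub[OF g] Q_def by auto
        have "H' \<subseteq> FF r n Q" using H'(1) nA nA2 unfolding FF_def Q_def by auto
        hence "cl r n H' \<subseteq> FF r n Q" unfolding cl_def using FF_K[OF r gQ] by blast
        hence "A \<in> FF r n Q" using H'(2) A unfolding FF_def by auto
        moreover have cA: "card A = Suc r" using cP A by auto
        moreover have cVA: "card (?V - A) = n - Suc r" using AV cA card_comp by simp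
        moreover have "A \<notin> Q" unfolding Q_def by auto
        moreover have "A \<noteq> ?V - C" if "C \<in> Q" for C
        proof
          assume "A = ?V - C"
          hence "card A = n - Suc r" using that QP cP card_comp unfolding Q_def by auto
          thus False using cA nbig by simp
        qed
        ultimately show False using nbig unfolding FF_def Ssm_def by auto
      qed
    qed
    hence "card P \<le> card (H' \<union> (\<lambda>X. ?V - X) ` H')" using fH' by (intro card_mono) auto
    also have "\<dots> \<le> card H' + card ((\<lambda>X. ?V - X) ` H')" by (rule card_Un_le)
    also have "\<dots> \<le> card H' + card H'" using card_image_le[OF fH'] by simp
    finally show ?thesis by simp
  qed
  show ?thesis using s1 s2 s3 s4 by blast
qed



definition wv :: "nat \<Rightarrow> nat \<Rightarrow> (nat \<Rightarrow> nat) \<Rightarrow> nat \<Rightarrow> nat" where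
  "wv m r v i = (if i < r then v i else (\<Sum>j<r. v j) mod m)"

definition blk :: "nat \<Rightarrow> nat \<Rightarrow> (nat \<Rightarrow> nat) \<Rightarrow> nat set" where
  "blk m r v = (\<lambda>i. i * m + wv m r v i + 1) ` {..r}"

definition Pm :: "nat \<Rightarrow> nat \<Rightarrow> nat set set" where
  "Pm m r = blk m r ` (PiE {..<r} (\<lambda>_. {..<m}))"

lemma mod_cancel_aux: "(a::nat) \<le> b \<Longrightarrow> b < m \<Longrightarrow> (a + s) mod m = (b + s) mod m \<Longrightarrow> a = b"
proof -
  assume ab: "a \<le> b" and bm: "b < m" and e: "(a + s) mod m = (b + s) mod m"
  have "m dvd (b + s) - (a + s)" using mod_eq_dvd_iff_nat[of "a + s" "b + s" m] ab e by simp
  hence d: "m dvd b - a" by simp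
  show "a = b"
  proof (rule ccontr)
    assume "a \<noteq> b"
    hence "0 < b - a" using ab by simp
    hence "m \<le> b - a" using d by (rule dvd_imp_le[rotated])
    thus False using bm by simp
  qed
qed

lemma mod_cancel_small: "(a::nat) < m \<Longrightarrow> b < m \<Longrightarrow> (a + s) mod m = (b + s) mod m \<Longrightarrow> a = b"
  by (metis mod_cancel_aux nat_le_linear)

lemma wv_lt: "m > 0 \<Longrightarrow> v \<in> PiE {..<r} (\<lambda>_. {..<m}) \<Longrightarrow> wv m r v i < m"
  unfolding wv_def by (auto simp: PiE_iff)

lemma enc_inj: "(a::nat) < m \<Longrightarrow> b < m \<Longrightarrow> i * m + a = j * m + b \<Longrightarrow> i = j \<and> a = b"
proof -
  assume a: "a < m" "b < m" "i * m + a = j * m + b"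
  have "(i * m + a) div m = i" using a(1) by simp
  moreover have "(j * m + b) div m = j" using a(2) by simp
  ultimately have "i = j" using a(3) by simp
  thus ?thesis using a(3) by simp
qed

lemma blk_sub: assumes "m > 0" "v \<in> PiE {..<r} (\<lambda>_. {..<m})"
  shows "blk m r v \<subseteq> vset (Suc r * m)"
proof
  fix x assume "x \<in> blk m r v"
  then obtain i where i: "i \<le> r" "x = i * m + wv m r v i + 1" unfolding blk_def by auto
  have "i * m \<le> r * m" using i(1) by simp
  moreover have "wv m r v i < m" using wv_lt assms by blast
  ultimately have "x \<le> r * m + m" using i(2) by linarith
  thus "x \<in> vset (Suc r * m)" using i(2) unfolding vset_def by auto
qed

lemma blk_inj: assumes "m > 0" "v \<in> PiE {..<r} (\<lambda>_. {..<m})"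
  shows "inj_on (\<lambda>i. i * m + wv m r v i + 1) {..r}"
  using enc_inj wv_lt[OF assms] unfolding inj_on_def by (metis add_right_cancel)

lemma blk_card: assumes "m > 0" "v \<in> PiE {..<r} (\<lambda>_. {..<m})"
  shows "card (blk m r v) = Suc r"
  unfolding blk_def using card_image[OF blk_inj[OF assms]] by simp

lemma blk_int: assumes m: "m > 0" and v: "v \<in> PiE {..<r} (\<lambda>_. {..<m})"
  and u: "u \<in> PiE {..<r} (\<lambda>_. {..<m})" and ne: "v \<noteq> u"
  shows "card (blk m r v \<inter> blk m r u) < r"
proof -
  define D where "D = {i. i \<le> r \<and> wv m r v i = wv m r u i}"
  have "blk m r v \<inter> blk m r u \<subseteq> (\<lambda>i. i * m + wv m r v i + 1) ` D"
  proof
    fix x assume "x \<in> blk m r v \<inter> blk m r u"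
    then obtain i j where ij: "i \<le> r" "j \<le> r" "x = i * m + wv m r v i + 1" "x = j * m + wv m r u j + 1"
      unfolding blk_def by auto
    have "i = j \<and> wv m r v i = wv m r u j"
      using enc_inj[OF wv_lt[OF m v] wv_lt[OF m u]] ij by (metis add_right_cancel)
    hence "i \<in> D" using ij unfolding D_def by auto
    thus "x \<in> (\<lambda>i. i * m + wv m r v i + 1) ` D" using ij(3) by blast
  qed
  moreover have fD: "finite D" unfolding D_def by simp
  ultimately have "card (blk m r v \<inter> blk m r u) \<le> card ((\<lambda>i. i * m + wv m r v i + 1) ` D)"
    by (intro card_mono) auto
  also have "\<dots> \<le> card D" using card_image_le[OF fD] by blast
  finally have c1: "card (blk m r v \<inter> blk m r u) \<le> card D" .
  obtain j where j: "j < r" "v j \<noteq> u j"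
    using ne v u by (metis PiE_E lessThan_iff ext)
  have jD: "j \<notin> D" using j unfolding D_def wv_def by auto
  have "card D < r"
  proof (rule ccontr)
    assume "\<not> card D < r"
    hence cD: "card D \<ge> r" by simp
    have "D \<subseteq> {..r} - {j}" using jD unfolding D_def by auto
    moreover have "card ({..r} - {j}) = r" using j by simp
    ultimately have "D = {..r} - {j}" using cD by (metis card_seteq finite_Diff finite_atMost)
    hence Deq: "\<And>i. i \<in> D \<longleftrightarrow> i \<le> r \<and> i \<noteq> j" by simp
    have rD: "r \<in> D" using Deq j by simp
    have oD: "v i = u i" if "i < r" "i \<noteq> j" for i
    proof -
      have "i \<in> D" using Deq that by simp
      hence "wv m r v i = wv m r u i" unfolding D_def by simp
      thus ?thesis using that unfolding wv_def by simp
    qed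
    have sums: "(\<Sum>i<r. v i) mod m = (\<Sum>i<r. u i) mod m" using rD unfolding D_def wv_def by simp
    have eqrest: "(\<Sum>i\<in>{..<r} - {j}. v i) = (\<Sum>i\<in>{..<r} - {j}. u i)"
      using oD by (intro sum.cong) auto
    have "(\<Sum>i<r. v i) = v j + (\<Sum>i\<in>{..<r} - {j}. v i)" using j by (simp add: sum.remove)
    moreover have "(\<Sum>i<r. u i) = u j + (\<Sum>i\<in>{..<r} - {j}. u i)" using j by (simp add: sum.remove)
    ultimately have "(v j + (\<Sum>i\<in>{..<r} - {j}. v i)) mod m = (u j + (\<Sum>i\<in>{..<r} - {j}. v i)) mod m"
      using sums eqrest by simp
    moreover have "v j < m" "u j < m" using v u j by (auto simp: PiE_iff)
    ultimately have "v j = u j" using mod_cancel_small by blast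
    thus False using j by simp
  qed
  thus ?thesis using c1 by simp
qed

lemma Pm_good: "m > 0 \<Longrightarrow> goodP r (Suc r * m) (Pm m r)"
proof -
  assume m: "m > 0"
  show ?thesis unfolding goodP_def Pm_def
  proof (intro conjI)
    show "blk m r ` (PiE {..<r} (\<lambda>_. {..<m})) \<subseteq> Pow (vset (Suc r * m))"
      using blk_sub[OF m] by blast
    show "\<forall>A\<in>blk m r ` (PiE {..<r} (\<lambda>_. {..<m})). card A = Suc r"
      using blk_card[OF m] by blast
    show "\<forall>A\<in>blk m r ` (PiE {..<r} (\<lambda>_. {..<m})). \<forall>B\<in>blk m r ` (PiE {..<r} (\<lambda>_. {..<m})). A \<noteq> B \<longrightarrow> card (A \<inter> B) < r"
      using blk_int[OF m] by blast
  qed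
qed

lemma Pm_card: assumes m: "m > 0" and r: "r > 0" shows "card (Pm m r) = m ^ r"
proof -
  have "inj_on (blk m r) (PiE {..<r} (\<lambda>_. {..<m}))"
  proof (rule inj_onI, rule ccontr)
    fix v u assume v: "v \<in> PiE {..<r} (\<lambda>_. {..<m})" and u: "u \<in> PiE {..<r} (\<lambda>_. {..<m})"
      and e: "blk m r v = blk m r u" and ne: "v \<noteq> u"
    have "card (blk m r v \<inter> blk m r u) < r" using blk_int[OF m v u ne] .
    thus False using e blk_card[OF m v] by simp
  qed
  hence "card (Pm m r) = card (PiE {..<r} (\<lambda>_. {..<m}))" unfolding Pm_def by (rule card_image)
  also have "\<dots> = m ^ r" by (simp add: card_PiE)
  finally show ?thesis .
qed



theorem theorem3:
  fixes r :: nat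
  assumes "r > 0"
  shows "\<exists>c::real. c > 0 \<and>
    infinite {n::nat. \<exists>H. H \<subseteq> Pow (vset n) \<and> r_cross_free r n H \<and> r_closed r n H \<and>
       (\<forall>H'. H' \<subseteq> H \<and> cl r n H' = H \<longrightarrow> real (card H') \<ge> c * real n ^ r)}"
proof -
  define c :: real where "c = 1 / (2 * real (Suc r) ^ r)"
  have cpos: "c > 0" unfolding c_def by simp
  let ?N = "{n::nat. \<exists>H. H \<subseteq> Pow (vset n) \<and> r_cross_free r n H \<and> r_closed r n H \<and>
       (\<forall>H'. H' \<subseteq> H \<and> cl r n H' = H \<longrightarrow> real (card H') \<ge> c * real n ^ r)}"
  have sub: "(\<lambda>m. Suc r * m) ` {3..} \<subseteq> ?N"
  proof
    fix n assume "n \<in> (\<lambda>m. Suc r * m) ` {3..}"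
    then obtain m where m: "m \<ge> 3" "n = Suc r * m" by auto
    have mp: "m > 0" using m by simp
    have nb: "n \<ge> 2 * r + 3" 
    proof -
      have "Suc r * 3 \<le> Suc r * m" using m(1) by (rule mult_le_mono2)
      thus ?thesis using m(2) by simp
    qed
    have g: "goodP r n (Pm m r)" using Pm_good[OF mp] m by simp
    note mp2 = main_props[OF assms g nb]
    have bound: "real (card H') \<ge> c * real n ^ r" if "card (Pm m r) \<le> 2 * card H'" for H'
    proof -
      have "real (m ^ r) \<le> 2 * real (card H')" using that Pm_card[OF mp assms] by linarith
      moreover have "c * real n ^ r = real m ^ r / 2"
        
      proof -
        have "real n ^ r = real (Suc r) ^ r * real m ^ r" unfolding m(2) by (simp only: of_nat_mult power_mult_distrib)
        thus ?thesis unfolding c_def by simp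
      qed
      ultimately show ?thesis by simp
    qed
    have p1: "FF r n (Pm m r) \<subseteq> Pow (vset n)" and p2: "r_cross_free r n (FF r n (Pm m r))"
      and p3: "r_closed r n (FF r n (Pm m r))"
      and p4: "\<And>H'. H' \<subseteq> FF r n (Pm m r) \<and> cl r n H' = FF r n (Pm m r) \<Longrightarrow> card (Pm m r) \<le> 2 * card H'"
      using mp2 by auto
    show "n \<in> ?N"
    proof (intro CollectI exI[of _ "FF r n (Pm m r)"] conjI allI impI p1 p2 p3)
      fix H' assume "H' \<subseteq> FF r n (Pm m r) \<and> cl r n H' = FF r n (Pm m r)"
      thus "real (card H') \<ge> c * real n ^ r" using p4 bound by blast
    qed
  qed
  have inj: "inj_on (\<lambda>m. Suc r * m) {3::nat..}"
    by (intro inj_onI) (metis mult_left_cancel nat.distinct(1))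
  have "infinite ((\<lambda>m. Suc r * m) ` {3::nat..})"
  proof
    assume "finite ((\<lambda>m. Suc r * m) ` {3::nat..})"
    hence "finite {3::nat..}" using finite_imageD inj by blast
    thus False using infinite_Ici by blast
  qed
  hence inf: "infinite ?N" by (rule infinite_super[OF sub])
  show ?thesis by (rule exI[of _ c], rule conjI, fact cpos, fact inf)
qed

end
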